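(* The distribution of a consistent sequence of exchangeable random permutations $(\boldsymbol\pi_n)_{n\geq1}$ is determined by the following predictive scheme. For any $\pi\in\mathcal S_n$ with $\mathrm{c}(\pi)=(n_1,\dots,n_k)$, if $\sigma^{(j)}\in\mathcal A(\pi)\subset\mathcal S_{n+1}$ is such that $z_{n+1}(\sigma^{(j)})=j$, then $$P(\boldsymbol\pi_{n+1}=\sigma^{(j)}\mid\boldsymbol\pi_n=\pi)=\begin{cases}\frac{1}{n_j}\frac{\varphi_k^{(n+1)}(n_1,\dots,n_j+1,\dots,n_k)}{\varphi_k^{(n)}(n_1,\dots,n_k)}&1\leq j\leq k\\ \frac{\varphi_{k+1}^{(n+1)}(n_1,\dots,n_k,1)}{\varphi_k^{(n)}(n_1,\dots,n_k)}&j=k+1\end{cases}$$ where $(\varphi^{(n)})_{n\geq1}$ is the EPPF of $(\mathrm{z}(\boldsymbol\pi_n))_{n\geq1}$. If $\sigma\notin\mathcal A(\pi)$, then $P(\boldsymbol\pi_{n+1}=\sigma\mid\boldsymbol\pi_n=\pi)=0$.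
   Context: $\mathcal S_n$ is the symmetric group on $[n]$. For $\pi\in\mathcal S_n$, $\mathrm{c}(\pi)$ is its vector of cycle lengths and $\mathrm{z}(\pi)=(z_1(\pi),\dots,z_n(\pi))$ its cycle structure, with $z_i(\pi)$ the ordinal of the cycle containing $i$ (cycles written starting from their least element and ordered by first elements, i.e. labels in order of appearance). The deletion map $\operatorname{del}:\mathcal S_{n+1}\to\mathcal S_n$ is $\operatorname{del}(\sigma)(i)=\sigma(i)$ if $i\neq\sigma^{-1}(n+1)$ and $\operatorname{del}(\sigma)(i)=\sigma(n+1)$ if $i=\sigma^{-1}(n+1)$; $\mathcal A(\pi)=\{\sigma\in\mathcal S_{n+1}:\operatorname{del}(\sigma)=\pi\}$ is the set of the $n+1$ permutations obtained by inserting $n+1$ into the cycle representation of $\pi$ (to the left of any element of an existing cycle, or as a new singleton cycle). A sequence $(\boldsymbol\pi_n)$, $\boldsymbol\pi_n\in\mathcal S_n$, is consistent if $\operatorname{del}(\boldsymbol\pi_{n+1})\overset{d}{=}\boldsymbol\pi_n$; each $\boldsymbol\pi_n$ is exchangeable, i.e. its pmf is $\varphi^{(n)}_k(n_1,\dots,n_k)/\prod_{j=1}^k(n_j-1)!$ for an EPPF $(\varphi^{(n)})$ (symmetric functions satisfying $\varphi^{(1)}_1(1)=1$ and $\varphi_k^{(n)}(n_1,\dots,n_k)=\sum_{j=1}^k\varphi_k^{(n+1)}(n_1,\dots,n_j+1,\dots,n_k)+\varphi_{k+1}^{(n+1)}(n_1,\dots,n_k,1)$), with $(n_1,\dots,n_k)$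 the cycle lengths. *)

theory Defs
  imports "HOL-Probability.Probability" "HOL-Combinatorics.Combinatorics"
begin

text \<open>Permutations of [n] = {1..n} are functions nat => nat with  p permutes {1..n}.\<close>

definition cycle_leader :: "(nat \<Rightarrow> nat) \<Rightarrow> nat \<Rightarrow> bool" where
  "cycle_leader p m \<longleftrightarrow> m = Min (orbit p m)"

definition cycle_lengths :: "nat \<Rightarrow> (nat \<Rightarrow> nat) \<Rightarrow> nat list" where
  "cycle_lengths n p = map (\<lambda>m. card (orbit p m)) (filter (cycle_leader p) [1..<n+1])"

text \<open>z_i(pi): ordinal (1-based) of the cycle containing i.\<close>
definition cycle_label :: "(nat \<Rightarrow> nat) \<Rightarrow> nat \<Rightarrow> nat" where
  "cycle_label p i = card {m. 1 \<le> m \<and> m \<le> Min (orbit p i) \<and> cycle_leader p m}"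

definition del :: "nat \<Rightarrow> (nat \<Rightarrow> nat) \<Rightarrow> nat \<Rightarrow> nat" where
  "del n s = (\<lambda>i. if i \<in> {1..n} then (if s i = n + 1 then s (n + 1) else s i) else i)"

definition ins_set :: "nat \<Rightarrow> (nat \<Rightarrow> nat) \<Rightarrow> (nat \<Rightarrow> nat) set" where
  "ins_set n p = {s. s permutes {1..n+1} \<and> del n s = p}"

text \<open>Compositions of n: lists of positive integers summing to n
  (the admissible arguments (n_1,...,n_k) of phi^(n)_k, with k = length).\<close>
definition compositions :: "nat \<Rightarrow> nat list set" where
  "compositions n = {xs. (\<forall>x\<in>set xs. 0 < x) \<and> sum_list xs = n}"

text \<open>EPPF: phi n xs stands for phi^(n)_k(n_1,...,n_k), xs = [n_1,...,n_k].\<close>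
definition is_EPPF :: "(nat \<Rightarrow> nat list \<Rightarrow> real) \<Rightarrow> bool" where
  "is_EPPF phi \<longleftrightarrow>
     (\<forall>n xs ys. xs \<in> compositions n \<and> mset xs = mset ys \<longrightarrow> phi n xs = phi n ys) \<and>
     phi 1 [1] = 1 \<and>
     (\<forall>n\<ge>1. \<forall>xs \<in> compositions n.
        phi n xs = (\<Sum>j<length xs. phi (n + 1) (xs[j := xs ! j + 1])) + phi (n + 1) (xs @ [1]))"

end

theory Submission
  imports Defs
begin


lemma upt_np: "[1..<(n::nat)+1+1] = [1..<n+1] @ [n+1]"
proof -
  have "[1..<Suc (n+1)] = [1..<n+1] @ [n+1]" by (rule upt_Suc_append) simp
  then show ?thesis by (simp only: Suc_eq_plus1)
qed

lemma orbit_closed_sub: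
  assumes "f x \<in> T" "\<And>y. y \<in> T \<Longrightarrow> f y \<in> T"
  shows "orbit f x \<subseteq> T"
proof
  fix y assume "y \<in> orbit f x" then show "y \<in> T"
    by induct (use assms in auto)
qed

lemma orbit_same:
  assumes "permutation f" "y \<in> orbit f x"
  shows "orbit f y = orbit f x"
  using orbit_cyclic_eq3[OF cyclic_on_orbit'[OF assms(1)] assms(2)] .

lemma perm_fin: "f permutes {1..(m::nat)} \<Longrightarrow> permutation f"
  using permutation_permutes by blast

lemma self_orb: "f permutes {1..(m::nat)} \<Longrightarrow> x \<in> orbit f x"
  by (rule permutation_self_in_orbit[OF perm_fin])

lemma orb_fin: "f permutes {1..(m::nat)} \<Longrightarrow> finite (orbit f x)"
  by (rule finite_orbit[OF self_orb])

lemma orb_sub: "f permutes {1..(m::nat)} \<Longrightarrow> x \<in> {1..m} \<Longrightarrow> orbit f x \<subseteq> {1..m}"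
  by (rule permutes_orbit_subset)

lemma orb_out: "f permutes {1..(m::nat)} \<Longrightarrow> x \<notin> {1..m} \<Longrightarrow> orbit f x = {x}"
  by (simp add: orbit_eq_singleton_iff permutes_not_in)

context
  fixes n :: nat and p s :: "nat \<Rightarrow> nat"
  assumes p: "p permutes {1..n}" and s: "s permutes {1..n+1}" and d: "del n s = p"
begin

lemma p_out: "i \<notin> {1..n} \<Longrightarrow> p i = i"
  using p permutes_not_in by fastforce

lemma s_out: "i \<notin> {1..n+1} \<Longrightarrow> s i = i"
  using s permutes_not_in by fastforce

lemma p_in: "i \<in> {1..n} \<Longrightarrow> s i \<noteq> n+1 \<Longrightarrow> p i = s i"
proof -
  assume "i \<in> {1..n}" "s i \<noteq> n+1"
  have "p i = del n s i" using d by simp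
  then show ?thesis using \<open>i \<in> {1..n}\<close> \<open>s i \<noteq> n+1\<close> by (simp add: del_def)
qed

lemma p_inb: "i \<in> {1..n} \<Longrightarrow> s i = n+1 \<Longrightarrow> p i = s (n+1)"
proof -
  assume "i \<in> {1..n}" "s i = n+1"
  have "p i = del n s i" using d by simp
  then show ?thesis using \<open>i \<in> {1..n}\<close> \<open>s i = n+1\<close> by (simp add: del_def)
qed

lemma caseA: "s (n+1) = n+1 \<Longrightarrow> s = p"
proof
  fix i assume a: "s (n+1) = n+1"
  have inj: "inj s" using s permutes_inj by blast
  show "s i = p i"
  proof (cases "i \<in> {1..n}")
    case True
    have "s i \<noteq> n+1"
    proof
      assume "s i = n+1"
      then have "s i = s (n+1)" using a by simp
      then have "i = n+1" using inj by (simp add: inj_eq)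
      then show False using True by simp
    qed
    then show ?thesis using p_in True by simp
  next
    case False
    then show ?thesis using p_out s_out a by (cases "i = n+1") auto
  qed
qed

lemma p_perm: "permutation p" using p by (rule perm_fin)
lemma s_perm: "permutation s" using s by (rule perm_fin)

lemma cl_len: "length (cycle_lengths n p) = card {m. 1 \<le> m \<and> m \<le> n \<and> cycle_leader p m}"
proof -
  have "length (cycle_lengths n p) = card ({m. cycle_leader p m} \<inter> set [1..<n+1])"
    unfolding cycle_lengths_def by (simp add: distinct_length_filter)
  also have "{m. cycle_leader p m} \<inter> set [1..<n+1] = {m. 1 \<le> m \<and> m \<le> n \<and> cycle_leader p m}"
    by auto
  finally show ?thesis .
qed

lemma caseA_result:
  assumes a: "s (n+1) = n+1"
  shows "cycle_lengths (n+1) s = cycle_lengths n p @ [1]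
         \<and> cycle_label s (n+1) = length (cycle_lengths n p) + 1"
proof -
  have sp: "s = p" using caseA a by blast
  have o: "orbit p (n+1) = {n+1}" using orb_out[OF p, of "n+1"] by simp
  have l: "cycle_leader p (n+1)" using o by (simp add: cycle_leader_def)
  note u = upt_np[of n]
  have 1: "cycle_lengths (n+1) s = cycle_lengths n p @ [1]"
    unfolding sp cycle_lengths_def u filter_append map_append using l o by simp
  have mn: "Min (orbit p (n+1)) = n+1" using o by simp
  have "{m. 1 \<le> m \<and> m \<le> Min (orbit s (n+1)) \<and> cycle_leader s m}
        = {m. 1 \<le> m \<and> m \<le> n+1 \<and> cycle_leader p m}" unfolding sp mn ..
  also have "\<dots> = insert (n+1) {m. 1 \<le> m \<and> m \<le> n \<and> cycle_leader p m}"
  proof (rule set_eqI)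
    fix m show "m \<in> {m. 1 \<le> m \<and> m \<le> n+1 \<and> cycle_leader p m} \<longleftrightarrow>
      m \<in> insert (n+1) {m. 1 \<le> m \<and> m \<le> n \<and> cycle_leader p m}"
      using l by (cases "m = n+1") auto
  qed
  finally have "cycle_label s (n+1) = card (insert (n+1) {m. 1 \<le> m \<and> m \<le> n \<and> cycle_leader p m})"
    unfolding cycle_label_def by simp
  also have "\<dots> = card {m. 1 \<le> m \<and> m \<le> n \<and> cycle_leader p m} + 1"
    by (subst card_insert_disjoint) auto
  finally have "cycle_label s (n+1) = card {m. 1 \<le> m \<and> m \<le> n \<and> cycle_leader p m} + 1" .
  with 1 show ?thesis using cl_len by simp
qed

context
  assumes a: "s (n+1) \<noteq> n+1"
begin

definition "bb = inv s (n+1)"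

lemma sb: "s bb = n+1"
  unfolding bb_def using s permutes_inverses(1) by fastforce

lemma b_ne: "bb \<noteq> n+1" using sb a by auto

lemma b_in: "bb \<in> {1..n}"
proof -
  have "bb \<in> {1..n+1}"
  proof (rule ccontr)
    assume "bb \<notin> {1..n+1}" then have "s bb = bb" by (rule s_out)
    then show False using sb b_ne by simp
  qed
  then show ?thesis using b_ne by auto
qed

lemma pb: "p bb = s (n+1)" using p_inb[OF b_in sb] .

lemma pn: "p (n+1) = n+1" using p_out by simp

lemma ps: "y \<noteq> bb \<Longrightarrow> y \<noteq> n+1 \<Longrightarrow> p y = s y"
proof -
  assume y: "y \<noteq> bb" "y \<noteq> n+1"
  show ?thesis
  proof (cases "y \<in> {1..n}")
    case True
    have "s y \<noteq> n+1"
    proof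
      assume "s y = n+1" then have "s y = s bb" using sb by simp
      then have "y = bb" using permutes_inj[OF s] by (simp add: inj_eq)
      then show False using y by simp
    qed
    then show ?thesis using p_in True by simp
  next
    case False
    then have "y \<notin> {1..n+1}" using y by auto
    then show ?thesis using p_out s_out False by simp
  qed
qed

lemma O1: "orbit s (n+1) = insert (n+1) (orbit p bb)"
proof
  show "orbit s (n+1) \<subseteq> insert (n+1) (orbit p bb)"
  proof (rule orbit_closed_sub)
    show "s (n+1) \<in> insert (n+1) (orbit p bb)" using orbit.base[of p bb] pb by simp
    fix y assume y: "y \<in> insert (n+1) (orbit p bb)"
    show "s y \<in> insert (n+1) (orbit p bb)"
    proof (cases "y = n+1")
      case True then show ?thesis using orbit.base[of p bb] pb by simp
    next
      case F: False
      show ?thesis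
      proof (cases "y = bb")
        case True then show ?thesis using sb by simp
      next
        case False
        then have "s y = p y" using ps F by simp
        moreover have "y \<in> orbit p bb" using y F by simp
        ultimately show ?thesis by (auto intro: orbit.step)
      qed
    qed
  qed
next
  have "orbit p bb \<subseteq> orbit s (n+1)"
  proof (rule orbit_closed_sub)
    show "p bb \<in> orbit s (n+1)" using pb by (auto intro: orbit.base)
    fix y assume y: "y \<in> orbit s (n+1)"
    show "p y \<in> orbit s (n+1)"
    proof (cases "y = n+1")
      case True then show ?thesis using pn y by simp
    next
      case F: False
      show ?thesis
      proof (cases "y = bb")
        case True then show ?thesis using pb by (auto intro: orbit.base)
      next
        case False
        then have "p y = s y" using ps F by simp
        then show ?thesis using y by (auto intro: orbit.step)
      qed
    qed
  qed
  then show "insert (n+1) (orbit p bb) \<subseteq> orbit s (n+1)"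
    using self_orb[OF s] by auto
qed

lemma np_notin: "x \<noteq> n+1 \<Longrightarrow> n+1 \<notin> orbit p x"
proof
  assume x: "x \<noteq> n+1" and "n+1 \<in> orbit p x"
  then have "orbit p (n+1) = orbit p x" using orbit_same[OF p_perm] by blast
  then have "orbit p x = {n+1}" using orb_out[OF p, of "n+1"] by simp
  then show False using self_orb[OF p, of x] x by simp
qed

lemma O2:
  assumes x: "x \<noteq> n+1" and nb: "bb \<notin> orbit p x"
  shows "orbit s x = orbit p x"
proof -
  have xb: "x \<noteq> bb" using nb self_orb[OF p, of x] by auto
  have sub: "orbit s x \<subseteq> orbit p x"
  proof (rule orbit_closed_sub)
    show "s x \<in> orbit p x" using ps[OF xb x] by (metis orbit.base)
    fix y assume y: "y \<in> orbit p x"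
    then have "y \<noteq> bb" "y \<noteq> n+1" using nb np_notin[OF x] by auto
    then have "s y = p y" using ps by simp
    then show "s y \<in> orbit p x" using y by (metis orbit.step)
  qed
  have "orbit p x \<subseteq> orbit s x"
  proof (rule orbit_closed_sub)
    show "p x \<in> orbit s x" using ps[OF xb x] by (metis orbit.base)
    fix y assume y: "y \<in> orbit s x"
    then have "y \<in> orbit p x" using sub by auto
    then have "y \<noteq> bb" "y \<noteq> n+1" using nb np_notin[OF x] by auto
    then have "p y = s y" using ps by simp
    then show "p y \<in> orbit s x" using y by (metis orbit.step)
  qed
  with sub show ?thesis by blast
qed

lemma O3:
  assumes x: "x \<noteq> n+1" and xb: "x \<in> orbit p bb"
  shows "orbit s x = insert (n+1) (orbit p x)"
proof -
  have "x \<in> orbit s (n+1)" using O1 xb by simp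
  then have "orbit s x = orbit s (n+1)" using orbit_same[OF s_perm] by blast
  moreover have "orbit p x = orbit p bb" using orbit_same[OF p_perm xb] .
  ultimately show ?thesis using O1 by simp
qed

definition "rr = Min (orbit p bb)"

lemma r_in: "rr \<in> orbit p bb"
  unfolding rr_def using orb_fin[OF p] orbit_nonempty by (rule Min_in)

lemma r_range: "rr \<in> {1..n}"
  using r_in orb_sub[OF p b_in] by auto

lemma r_leader: "cycle_leader p rr"
  unfolding cycle_leader_def using orbit_same[OF p_perm r_in] rr_def by simp

lemma leader_iff:
  assumes m: "m \<in> {1..n}"
  shows "cycle_leader s m \<longleftrightarrow> cycle_leader p m"
proof (cases "bb \<in> orbit p m")
  case True
  have mo: "m \<in> orbit p bb" using orbit_same[OF p_perm True] self_orb[OF p, of m] by simp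
  have m1: "m \<noteq> n+1" using m by simp
  have e: "orbit s m = insert (n+1) (orbit p m)" using O3[OF m1 mo] .
  have le: "Min (orbit p m) \<le> n" using orb_sub[OF p m] orb_fin[OF p] orbit_nonempty
    by (metis Min_in atLeastAtMost_iff subsetD)
  have "Min (orbit s m) = Min (orbit p m)"
    unfolding e Min.insert[OF orb_fin[OF p] orbit_nonempty] using le by (simp add: min_def)
  then show ?thesis unfolding cycle_leader_def by simp
next
  case False
  then show ?thesis using O2[of m] m unfolding cycle_leader_def by simp
qed

lemma not_leader_np: "\<not> cycle_leader s (n+1)"
proof -
  have "Min (orbit s (n+1)) = min (n+1) rr"
    unfolding O1 rr_def Min.insert[OF orb_fin[OF p] orbit_nonempty] ..
  then show ?thesis unfolding cycle_leader_def using r_range by auto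
qed

lemma card_rel:
  assumes m: "m \<in> {1..n}" and l: "cycle_leader p m"
  shows "card (orbit s m) = card (orbit p m) + (if m = rr then 1 else 0)"
proof (cases "bb \<in> orbit p m")
  case True
  have eq: "orbit p m = orbit p bb" using orbit_same[OF p_perm True] by simp
  have mo: "m \<in> orbit p bb" using eq self_orb[OF p, of m] by simp
  have m1: "m \<noteq> n+1" using m by simp
  have "m = rr" using l eq unfolding cycle_leader_def rr_def by simp
  moreover have "card (orbit s m) = card (orbit p m) + 1"
    unfolding O3[OF m1 mo] using orb_fin[OF p] np_notin[OF m1] by simp
  ultimately show ?thesis by simp
next
  case False
  have "m \<noteq> rr"
  proof
    assume "m = rr"
    then have "orbit p m = orbit p bb" using orbit_same[OF p_perm r_in] by simp
    then show False using False self_orb[OF p, of bb] by simp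
  qed
  then show ?thesis using O2[of m] m False by simp
qed

lemma caseB_result:
  "\<exists>A B r0. cycle_lengths n p = A @ r0 # B \<and> cycle_lengths (n+1) s = A @ (r0+1) # B
     \<and> cycle_label s (n+1) = length A + 1 \<and> r0 \<ge> 1"
proof -
  define P where "P = cycle_leader p"
  define f where "f = (\<lambda>m. card (orbit p m))"
  define g where "g = (\<lambda>m. card (orbit s m))"
  have r1: "1 \<le> rr" "rr \<le> n" using r_range by auto
  have L: "[1..<n+1] = [1..<rr] @ rr # [Suc rr..<n+1]"
  proof -
    have "[1..<rr + (n+1-rr)] = [1..<rr] @ [rr..<rr + (n+1-rr)]"
      by (rule upt_add_eq_append[OF r1(1)])
    moreover have "rr + (n+1-rr) = n+1" using r1 by simp
    moreover have "[rr..<n+1] = rr # [Suc rr..<n+1]" using r1 by (simp add: upt_conv_Cons)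
    ultimately show ?thesis by simp
  qed
  define A0 where "A0 = filter P [1..<rr]"
  define B0 where "B0 = filter P [Suc rr..<n+1]"
  have FL: "filter P [1..<n+1] = A0 @ rr # B0"
    unfolding A0_def B0_def L using r_leader P_def by simp
  have c1: "cycle_lengths n p = map f A0 @ f rr # map f B0"
    unfolding cycle_lengths_def f_def[symmetric] P_def[symmetric] FL by simp
  have "filter (cycle_leader s) [1..<n+1+1] = filter (cycle_leader s) [1..<n+1]"
    unfolding upt_np filter_append using not_leader_np by simp
  also have "\<dots> = filter P [1..<n+1]"
    unfolding P_def by (rule filter_cong) (auto simp: leader_iff)
  finally have fs: "filter (cycle_leader s) [1..<n+1+1] = A0 @ rr # B0" using FL by simp
  have gA: "map g A0 = map f A0"
  proof (rule map_cong[OF refl])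
    fix m assume "m \<in> set A0"
    then have "m \<in> {1..n}" "P m" "m \<noteq> rr" unfolding A0_def using r1 by auto
    then show "g m = f m" unfolding g_def f_def P_def using card_rel by simp
  qed
  have gB: "map g B0 = map f B0"
  proof (rule map_cong[OF refl])
    fix m assume "m \<in> set B0"
    then have "m \<in> {1..n}" "P m" "m \<noteq> rr" unfolding B0_def using r1 by auto
    then show "g m = f m" unfolding g_def f_def P_def using card_rel by simp
  qed
  have gr: "g rr = f rr + 1" unfolding g_def f_def using card_rel[OF r_range r_leader] by simp
  have c2: "cycle_lengths (n+1) s = map f A0 @ (f rr + 1) # map f B0"
    unfolding cycle_lengths_def g_def[symmetric] fs using gA gB gr by simp
  have "Min (orbit s (n+1)) = rr"
    unfolding O1 Min.insert[OF orb_fin[OF p] orbit_nonempty] rr_def[symmetric] using r_range by (simp add: min_def)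
  then have "{m. 1 \<le> m \<and> m \<le> Min (orbit s (n+1)) \<and> cycle_leader s m}
      = insert rr ({m. P m} \<inter> set [1..<rr])"
    using r1 leader_iff r_leader unfolding P_def by auto
  then have "cycle_label s (n+1) = card ({m. P m} \<inter> set [1..<rr]) + 1"
    unfolding cycle_label_def by simp
  also have "card ({m. P m} \<inter> set [1..<rr]) = length (map f A0)"
    unfolding A0_def by (simp add: distinct_length_filter)
  finally have c3: "cycle_label s (n+1) = length (map f A0) + 1" .
  have "f rr \<ge> 1" unfolding f_def using orb_fin[OF p] orbit_nonempty
    by (metis One_nat_def Suc_leI card_gt_0_iff)
  then show ?thesis using c1 c2 c3 by blast
qed

end

end


lemma prodpos: "(\<Prod>l\<leftarrow>xs. fact (l - 1) :: real) > 0"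
  by (induct xs) auto

lemma prod_app: "(\<Prod>l\<leftarrow>A @ r # B. fact (l - 1) :: real)
   = (\<Prod>l\<leftarrow>A. fact (l - 1)) * fact (r - 1) * (\<Prod>l\<leftarrow>B. fact (l - 1))"
  by simp

theorem proposition3:
  fixes M :: "'w measure"
    and X :: "nat \<Rightarrow> 'w \<Rightarrow> (nat \<Rightarrow> nat)"
    and phi :: "nat \<Rightarrow> nat list \<Rightarrow> real"
    and n :: nat and p s :: "nat \<Rightarrow> nat"
  assumes "prob_space M"
    and meas: "\<And>m. m \<ge> 1 \<Longrightarrow> X m \<in> measurable M (count_space UNIV)"
    and perm: "\<And>m \<omega>. m \<ge> 1 \<Longrightarrow> \<omega> \<in> space M \<Longrightarrow> X m \<omega> permutes {1..m}"
    and consistent: "\<And>m. m \<ge> 1 \<Longrightarrow> AE \<omega> in M. del m (X (m + 1) \<omega>) = X m \<omega>"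
    and eppf: "is_EPPF phi"
    and exch: "\<And>m q. m \<ge> 1 \<Longrightarrow> q permutes {1..m} \<Longrightarrow>
        measure M {\<omega> \<in> space M. X m \<omega> = q} =
          phi m (cycle_lengths m q) / (\<Prod>l\<leftarrow>cycle_lengths m q. fact (l - 1))"
    and n: "n \<ge> 1"
    and p: "p permutes {1..n}"
    and pos: "measure M {\<omega> \<in> space M. X n \<omega> = p} > 0"
    and s: "s permutes {1..n+1}"
  shows "measure M {\<omega> \<in> space M. X (n+1) \<omega> = s \<and> X n \<omega> = p} /
           measure M {\<omega> \<in> space M. X n \<omega> = p} =
         (if s \<in> ins_set n p then
            (let c = cycle_lengths n p; k = length c; j = cycle_label s (n + 1) in
              if j \<le> k then
                (1 / real (c ! (j - 1))) * (phi (n + 1) (c[j - 1 := c ! (j - 1) + 1]) / phi n c)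
              else phi (n + 1) (c @ [1]) / phi n c)
          else 0)"
proof -
  have sets1: "{\<omega> \<in> space M. X m \<omega> = q} \<in> sets M" if "m \<ge> 1" for m q
  proof -
    have "X m -` {q} \<inter> space M \<in> sets M" by (rule measurable_sets[OF meas[OF that]]) auto
    moreover have "X m -` {q} \<inter> space M = {\<omega> \<in> space M. X m \<omega> = q}" by auto
    ultimately show ?thesis by simp
  qed
  have n1: "n + 1 \<ge> 1" by simp
  have setA: "{\<omega> \<in> space M. X (n+1) \<omega> = s \<and> X n \<omega> = p} \<in> sets M"
  proof -
    have "{\<omega> \<in> space M. X (n+1) \<omega> = s \<and> X n \<omega> = p}
      = {\<omega> \<in> space M. X (n+1) \<omega> = s} \<inter> {\<omega> \<in> space M. X n \<omega> = p}" by auto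
    then show ?thesis using sets1[OF n1] sets1[OF n] by simp
  qed
  have AE: "AE \<omega> in M. del n (X (n + 1) \<omega>) = X n \<omega>" using consistent[OF n] .
  define c where "c = cycle_lengths n p"
  define Q where "Q = (\<Prod>l\<leftarrow>c. fact (l - 1) :: real)"
  have Qpos: "Q > 0" unfolding Q_def by (rule prodpos)
  have Pp: "measure M {\<omega> \<in> space M. X n \<omega> = p} = phi n c / Q"
    unfolding c_def Q_def using exch[OF n p] .
  have phin: "phi n c \<noteq> 0" using pos Pp by auto
  show ?thesis
  proof (cases "s \<in> ins_set n p")
    case False
    then have ds: "del n s \<noteq> p" using s unfolding ins_set_def by simp
    have "measure M {\<omega> \<in> space M. X (n+1) \<omega> = s \<and> X n \<omega> = p} = measure M {}"
      by (rule measure_eq_AE) (use AE ds setA in auto)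
    then show ?thesis using False by simp
  next
    case True
    then have ds: "del n s = p" unfolding ins_set_def by simp
    have "measure M {\<omega> \<in> space M. X (n+1) \<omega> = s \<and> X n \<omega> = p}
        = measure M {\<omega> \<in> space M. X (n+1) \<omega> = s}"
      by (rule measure_eq_AE) (use AE ds setA sets1[OF n1] in auto)
    also have "\<dots> = phi (n+1) (cycle_lengths (n+1) s) / (\<Prod>l\<leftarrow>cycle_lengths (n+1) s. fact (l - 1))"
      using exch[OF n1 s] .
    finally have Ps: "measure M {\<omega> \<in> space M. X (n+1) \<omega> = s \<and> X n \<omega> = p}
        = phi (n+1) (cycle_lengths (n+1) s) / (\<Prod>l\<leftarrow>cycle_lengths (n+1) s. fact (l - 1))" .
    show ?thesis
    proof (cases "s (n+1) = n+1")
      case True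
      have R: "cycle_lengths (n+1) s = c @ [1] \<and> cycle_label s (n+1) = length c + 1"
        using caseA_result[OF p s ds True] unfolding c_def .
      have Q1: "(\<Prod>l\<leftarrow>c @ [1]. fact (l - 1) :: real) = Q" unfolding Q_def by simp
      have "measure M {\<omega> \<in> space M. X (n+1) \<omega> = s \<and> X n \<omega> = p} /
           measure M {\<omega> \<in> space M. X n \<omega> = p}
           = (phi (n+1) (c @ [1]) / Q) / (phi n c / Q)"
        unfolding Ps Pp R[THEN conjunct1] Q1 ..
      also have "\<dots> = phi (n+1) (c @ [1]) / phi n c"
        using Qpos phin by (simp add: field_simps)
      finally show ?thesis using \<open>s \<in> ins_set n p\<close> R unfolding c_def[symmetric]
        by (simp add: Let_def)
    next
      case False
      obtain A B r0 where R: "c = A @ r0 # B" "cycle_lengths (n+1) s = A @ (r0+1) # B"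
        "cycle_label s (n+1) = length A + 1" "r0 \<ge> 1"
        using caseB_result[OF p s ds False] unfolding c_def by blast
      define a where "a = (\<Prod>l\<leftarrow>A. fact (l - 1) :: real)"
      define b where "b = (\<Prod>l\<leftarrow>B. fact (l - 1) :: real)"
      have Qe: "Q = a * fact (r0 - 1) * b" unfolding Q_def a_def b_def R(1) by simp
      have Q2: "(\<Prod>l\<leftarrow>A @ (r0+1) # B. fact (l - 1) :: real) = a * (real r0 * fact (r0 - 1)) * b"
        unfolding a_def b_def using R(4) by (simp add: fact_reduce)
      have ab: "a > 0" "b > 0" unfolding a_def b_def by (rule prodpos)+
      have cj: "c ! (length A) = r0" "c[length A := r0 + 1] = A @ (r0+1) # B" "length A + 1 \<le> length c"
        unfolding R(1) by (simp_all add: nth_append list_update_append)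
      have r0p: "real r0 > 0" using R(4) by simp
      have fp: "(fact (r0 - 1) :: real) > 0" by simp
      have "measure M {\<omega> \<in> space M. X (n+1) \<omega> = s \<and> X n \<omega> = p} /
           measure M {\<omega> \<in> space M. X n \<omega> = p}
           = (phi (n+1) (A @ (r0+1) # B) / (a * (real r0 * fact (r0 - 1)) * b)) / (phi n c / (a * fact (r0 - 1) * b))"
        unfolding Ps Pp Q2 R(2) Qe ..
      also have "\<dots> = (1 / real r0) * (phi (n+1) (A @ (r0+1) # B) / phi n c)"
        using ab r0p fp phin by (simp add: field_simps)
      finally show ?thesis using \<open>s \<in> ins_set n p\<close> cj R(3) unfolding c_def[symmetric]
        by (simp add: Let_def)
    qed
  qed
qed

end
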